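(* Let $(\Omega,\mathcal{F},P_0)$ be a complete probability space, $\epsilon\in(0,1)$, $\mathcal{C}\subseteq\mathcal{F}$ a sub-$\sigma$-algebra, and $\rho:L^{2+\epsilon}_{\mathcal{F}}(\Omega,P_0)\to\mathbb{R}$ a sublinear operator with representation set $\mathcal{P}$. Suppose $\rho$ is stable and proper. Then for any $P\in\mathcal{P}$ and any integrable random variable $\xi$ (so that the expectations below are well defined), there exists $\bar P\in\mathcal{P}$ such that $$E_{\bar P}[\xi]=E_{P_0}\big[E_P[\xi\mid\mathcal{C}]\big].$$
   Context: A sublinear operator is a map $\rho:L^{2+\epsilon}_{\mathcal{F}}(\Omega,P_0)\to\mathbb{R}$ that is monotone ($\xi_1\ge\xi_2\Rightarrow\rho(\xi_1)\ge\rho(\xi_2)$), constant preserving ($\rho(c)=c$), sub-additive ($\rho(\xi_1+\xi_2)\le\rho(\xi_1)+\rho(\xi_2)$) and positively homogeneous ($\rho(\lambda\xi)=\lambda\rho(\xi)$ for $\lambda\ge0$). Its representation set $\mathcal{P}$ is the family of all linear expectations (identified with probability measures $P$) dominated by $\rho$, so that $\rho(\xi)=\max_{P\in\mathcal{P}}E_P[\xi]$. For $P\in\mathcal{P}$ write $f^P=\frac{dP}{dP_0}$ and $\mathcal{D}=\{f^P:P\in\mathcal{P}\}$. $\rho$ is proper if every $P\in\mathcal{P}$ is equivalent to $P_0$. $\rho$ (equivalently $\mathcal{P}$) is stable if for each $P\in\mathcal{P}$, with $f^P_{\mathcal{C}}:=E_{P_0}[f^P\mid\mathcal{C}]$, the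 random variable $f^P/f^P_{\mathcal{C}}$ lies in $\mathcal{D}$. Standing assumption: $\mathcal{D}$ is norm-bounded in $L^{1+\frac{2}{\epsilon}}_{\mathcal{F}}(P_0)$ and compact for the weak topology $\sigma(L^{1+\frac{2}{\epsilon}}(P_0),L^{1+\frac{\epsilon}{2}}(P_0))$. *)

theory Defs
  imports "HOL-Probability.Probability"
begin

definition Lp_set :: "'a measure \<Rightarrow> real \<Rightarrow> ('a \<Rightarrow> real) set" where
  "Lp_set M p = {\<xi> \<in> borel_measurable M. integrable M (\<lambda>x. \<bar>\<xi> x\<bar> powr p)}"

text \<open>Sublinear operator on \<open>L^p(M)\<close>; inequalities between random variables are meant
  almost surely (elements of \<open>L^p\<close> are equivalence classes).\<close>
definition sublinear_operator :: "'a measure \<Rightarrow> real \<Rightarrow> (('a \<Rightarrow> real) \<Rightarrow> real) \<Rightarrow> bool" where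
  "sublinear_operator M p \<rho> \<longleftrightarrow>
     (\<forall>\<xi>1\<in>Lp_set M p. \<forall>\<xi>2\<in>Lp_set M p. (AE x in M. \<xi>1 x \<ge> \<xi>2 x) \<longrightarrow> \<rho> \<xi>1 \<ge> \<rho> \<xi>2) \<and>
     (\<forall>c. \<rho> (\<lambda>_. c) = c) \<and>
     (\<forall>\<xi>1\<in>Lp_set M p. \<forall>\<xi>2\<in>Lp_set M p. \<rho> (\<lambda>x. \<xi>1 x + \<xi>2 x) \<le> \<rho> \<xi>1 + \<rho> \<xi>2) \<and>
     (\<forall>\<xi>\<in>Lp_set M p. \<forall>l::real. l \<ge> 0 \<longrightarrow> \<rho> (\<lambda>x. l * \<xi> x) = l * \<rho> \<xi>)"

definition rep_set :: "'a measure \<Rightarrow> real \<Rightarrow> (('a \<Rightarrow> real) \<Rightarrow> real) \<Rightarrow> 'a measure set" where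
  "rep_set M p \<rho> = {P. prob_space P \<and> sets P = sets M \<and> absolutely_continuous M P \<and>
     (\<forall>\<xi>\<in>Lp_set M p. integrable P \<xi> \<and> integral\<^sup>L P \<xi> \<le> \<rho> \<xi>)}"

definition density_of :: "'a measure \<Rightarrow> 'a measure \<Rightarrow> 'a \<Rightarrow> real" where
  "density_of M P = (\<lambda>x. enn2real (RN_deriv M P x))"

definition dens_set :: "'a measure \<Rightarrow> real \<Rightarrow> (('a \<Rightarrow> real) \<Rightarrow> real) \<Rightarrow> ('a \<Rightarrow> real) set" where
  "dens_set M p \<rho> = density_of M ` rep_set M p \<rho>"

definition proper_op :: "'a measure \<Rightarrow> real \<Rightarrow> (('a \<Rightarrow> real) \<Rightarrow> real) \<Rightarrow> bool" where
  "proper_op M p \<rho> \<longleftrightarrow>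
     (\<forall>P\<in>rep_set M p \<rho>. absolutely_continuous M P \<and> absolutely_continuous P M)"

definition stable_op :: "'a measure \<Rightarrow> 'a measure \<Rightarrow> real \<Rightarrow> (('a \<Rightarrow> real) \<Rightarrow> real) \<Rightarrow> bool" where
  "stable_op M C p \<rho> \<longleftrightarrow>
     (\<forall>P\<in>rep_set M p \<rho>. \<exists>g\<in>dens_set M p \<rho>.
        AE x in M. g x = density_of M P x / real_cond_exp M C (density_of M P) x)"

definition weak_topology_Lp :: "'a measure \<Rightarrow> real \<Rightarrow> real \<Rightarrow> ('a \<Rightarrow> real) topology" where
  "weak_topology_Lp M q r = topology_generated_by
     {{f \<in> Lp_set M q. (\<integral>x. f x * g x \<partial>M) \<in> U} | g U. g \<in> Lp_set M r \<and> open U}"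

definition standing_assumption :: "'a measure \<Rightarrow> real \<Rightarrow> (('a \<Rightarrow> real) \<Rightarrow> real) \<Rightarrow> bool" where
  "standing_assumption M \<epsilon> \<rho> \<longleftrightarrow>
     dens_set M (2 + \<epsilon>) \<rho> \<subseteq> Lp_set M (1 + 2 / \<epsilon>) \<and>
     (\<exists>B. \<forall>f\<in>dens_set M (2 + \<epsilon>) \<rho>. (\<integral>x. \<bar>f x\<bar> powr (1 + 2 / \<epsilon>) \<partial>M) powr (1 / (1 + 2 / \<epsilon>)) \<le> B) \<and>
     compactin (weak_topology_Lp M (1 + 2 / \<epsilon>) (1 + \<epsilon> / 2)) (dens_set M (2 + \<epsilon>) \<rho>)"

end

theory Submission
  imports Defs
begin

lemma rep_basic:
  assumes "prob_space M" "Q \<in> rep_set M p \<rho>"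
  shows "prob_space Q" "sets Q = sets M" "absolutely_continuous M Q"
    "density_of M Q \<in> borel_measurable M"
    "\<And>k. k \<in> borel_measurable M \<Longrightarrow> integrable Q k \<longleftrightarrow> integrable M (\<lambda>x. density_of M Q x * k x)"
    "\<And>k. k \<in> borel_measurable M \<Longrightarrow> integral\<^sup>L Q k = (\<integral>x. density_of M Q x * k x \<partial>M)"
proof -
  interpret M: prob_space M by fact
  show pQ: "prob_space Q" and sQ: "sets Q = sets M" and ac: "absolutely_continuous M Q"
    using assms(2) unfolding rep_set_def by auto
  have sf: "sigma_finite_measure Q" using pQ prob_space_imp_sigma_finite by blast
  show "density_of M Q \<in> borel_measurable M" unfolding density_of_def by simp
  show "\<And>k. k \<in> borel_measurable M \<Longrightarrow> integrable Q k \<longleftrightarrow> integrable M (\<lambda>x. density_of M Q x * k x)"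
    unfolding density_of_def using M.RN_deriv_integrable[OF sf ac sQ] by blast
  show "\<And>k. k \<in> borel_measurable M \<Longrightarrow> integral\<^sup>L Q k = (\<integral>x. density_of M Q x * k x \<partial>M)"
    unfolding density_of_def using M.RN_deriv_integral[OF sf ac sQ] by blast
qed

theorem proposition1:
  fixes M C :: "'a measure" and \<epsilon> :: real and \<rho> :: "('a \<Rightarrow> real) \<Rightarrow> real"
    and P :: "'a measure" and \<xi> :: "'a \<Rightarrow> real"
  assumes "prob_space M" and "complete_measure M"
    and "0 < \<epsilon>" and "\<epsilon> < 1"
    and "subalgebra M C"
    and "sublinear_operator M (2 + \<epsilon>) \<rho>"
    and "standing_assumption M \<epsilon> \<rho>"
    and "stable_op M C (2 + \<epsilon>) \<rho>"
    and "proper_op M (2 + \<epsilon>) \<rho>"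
    and "P \<in> rep_set M (2 + \<epsilon>) \<rho>"
    and "\<xi> \<in> borel_measurable M" and "integrable M \<xi>"
    and "\<forall>Q\<in>rep_set M (2 + \<epsilon>) \<rho>. integrable Q \<xi>"
  shows "\<exists>Pbar\<in>rep_set M (2 + \<epsilon>) \<rho>.
           integral\<^sup>L Pbar \<xi> = integral\<^sup>L M (real_cond_exp P C \<xi>)"
proof -
  interpret M: prob_space M by fact
  note PB = rep_basic[OF assms(1) assms(10)]
  interpret Pp: prob_space P by (rule PB(1))
  have sP: "sets P = sets M" by (rule PB(2))
  have acPM: "absolutely_continuous P M" using assms(9,10) unfolding proper_op_def by auto
  interpret MC: finite_measure_subalgebra M C
    by (unfold_locales, rule assms(5))
  have subP: "subalgebra P C" using assms(5) sP sets_eq_imp_space_eq[OF sP]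
    unfolding subalgebra_def by auto
  interpret PC: finite_measure_subalgebra P C
    by (unfold_locales, rule subP)
  define f where "f = density_of M P"
  define F where "F = real_cond_exp M C f"
  define h where "h = real_cond_exp P C \<xi>"
  have fM[measurable]: "f \<in> borel_measurable M" unfolding f_def by (rule PB(4))
  have f0: "\<And>x. f x \<ge> 0" unfolding f_def density_of_def by simp
  have FC[measurable]: "F \<in> borel_measurable C" unfolding F_def by simp
  have FM[measurable]: "F \<in> borel_measurable M" unfolding F_def by simp
  have hC[measurable]: "h \<in> borel_measurable C" unfolding h_def by simp
  have hM[measurable]: "h \<in> borel_measurable M" using measurable_from_subalg[OF MC.subalg hC] .
  have xiP[measurable]: "\<xi> \<in> borel_measurable P" using assms(11) measurable_cong_sets[OF sP refl] by blast
  have fint: "integrable M f"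
    using PB(5)[of "\<lambda>_. 1"] unfolding f_def by simp
  have "AE x in M. RN_deriv M P x \<noteq> \<infinity>"
    using M.RN_deriv_finite[OF prob_space_imp_sigma_finite[OF PB(1)] PB(3) sP] .
  moreover have "AE x in M. 0 < RN_deriv M P x"
  proof -
    have "density M (RN_deriv M P) = P" using M.density_RN_deriv[OF PB(3) sP] .
    moreover have "AE x in density M (RN_deriv M P). 0 < RN_deriv M P x"
      by (subst AE_density) auto
    ultimately have "AE x in P. 0 < RN_deriv M P x" by metis
    then show ?thesis using absolutely_continuous_AE[OF sP[symmetric] acPM] by blast
  qed
  ultimately have fpos: "AE x in M. f x > 0"
    unfolding f_def density_of_def by eventually_elim (auto simp: enn2real_positive_iff less_top)
  have Fpos: "AE x in M. F x > 0"
  proof -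
    define A where "A = {x \<in> space M. F x \<le> 0}"
    have "{x \<in> space C. F x \<le> 0} \<in> sets C" by measurable
    then have AC: "A \<in> sets C" unfolding A_def
      using MC.subalg unfolding subalgebra_def by simp
    then have AM: "A \<in> sets M" using MC.subalg unfolding subalgebra_def by auto
    have eq: "(\<integral>x\<in>A. f x \<partial>M) = (\<integral>x\<in>A. F x \<partial>M)"
      unfolding F_def by (rule MC.real_cond_exp_intA[OF fint AC])
    have "0 \<le> (\<integral>x. - (indicator A x *\<^sub>R F x) \<partial>M)"
      by (intro integral_nonneg_AE AE_I2) (auto simp: A_def indicator_def)
    then have "(\<integral>x\<in>A. F x \<partial>M) \<le> 0"
      unfolding set_lebesgue_integral_def by simp
    moreover have "(\<integral>x\<in>A. f x \<partial>M) \<ge> 0"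
      unfolding set_lebesgue_integral_def
      by (intro integral_nonneg_AE AE_I2) (auto simp: f0 indicator_def)
    ultimately have z: "integral\<^sup>L M (\<lambda>x. indicator A x * f x) = 0"
      using eq unfolding set_lebesgue_integral_def by simp
    have "integrable M (\<lambda>x. indicator A x * f x)"
      using integrable_mult_indicator[OF AM fint] by simp
    then have "AE x in M. indicator A x * f x = 0"
      using z integral_nonneg_eq_0_iff_AE[of M "\<lambda>x. indicator A x * f x"] f0 by simp
    then show ?thesis using fpos AE_space
      by eventually_elim (auto simp: A_def indicator_def split: if_splits)
  qed
  obtain g where g: "g \<in> dens_set M (2 + \<epsilon>) \<rho>" and gae: "AE x in M. g x = f x / F x"
    using assms(8,10) unfolding stable_op_def f_def F_def by blast
  obtain Q where Q: "Q \<in> rep_set M (2 + \<epsilon>) \<rho>" and gQ: "g = density_of M Q"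
    using g unfolding dens_set_def by blast
  note QB = rep_basic[OF assms(1) Q]
  have gM[measurable]: "g \<in> borel_measurable M" using QB(4) gQ by simp
  have xiM[measurable]: "\<xi> \<in> borel_measurable M" by (rule assms(11))
  have i1: "integrable M (\<lambda>x. g x * \<xi> x)" using QB(5)[OF xiM] assms(13) Q gQ by simp
  have e1: "integral\<^sup>L Q \<xi> = (\<integral>x. g x * \<xi> x \<partial>M)" using QB(6)[OF xiM] gQ by simp
  have ae2: "AE x in M. g x * \<xi> x = f x * (1 / F x * \<xi> x)" using gae by eventually_elim simp
  have i2: "integrable M (\<lambda>x. f x * (1 / F x * \<xi> x))"
    using integrable_cong_AE[OF _ _ ae2] i1 by simp
  have e2: "(\<integral>x. g x * \<xi> x \<partial>M) = (\<integral>x. f x * (1 / F x * \<xi> x) \<partial>M)"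
    using integral_cong_AE[OF _ _ ae2] by simp
  have i3: "integrable P (\<lambda>x. 1 / F x * \<xi> x)" using PB(5)[of "\<lambda>x. 1 / F x * \<xi> x"] i2 f_def by simp
  have e3: "integral\<^sup>L P (\<lambda>x. 1 / F x * \<xi> x) = (\<integral>x. f x * (1 / F x * \<xi> x) \<partial>M)"
    using PB(6)[of "\<lambda>x. 1 / F x * \<xi> x"] f_def by simp
  have FCm: "(\<lambda>x. 1 / F x) \<in> borel_measurable C" by measurable
  have i4: "integrable P (\<lambda>x. 1 / F x * h x)"
    unfolding h_def by (rule PC.real_cond_exp_intg(1)[OF i3 FCm xiP])
  have e4: "integral\<^sup>L P (\<lambda>x. 1 / F x * h x) = integral\<^sup>L P (\<lambda>x. 1 / F x * \<xi> x)"
    unfolding h_def by (rule PC.real_cond_exp_intg(2)[OF i3 FCm xiP])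
  have i5: "integrable M (\<lambda>x. f x * (1 / F x * h x))" using PB(5)[of "\<lambda>x. 1 / F x * h x"] i4 f_def by simp
  have e5: "integral\<^sup>L P (\<lambda>x. 1 / F x * h x) = (\<integral>x. f x * (1 / F x * h x) \<partial>M)"
    using PB(6)[of "\<lambda>x. 1 / F x * h x"] f_def by simp
  have i5': "integrable M (\<lambda>x. (1 / F x * h x) * f x)" using i5 by (simp add: mult.commute)
  have kC: "(\<lambda>x. 1 / F x * h x) \<in> borel_measurable C" by measurable
  have e6: "(\<integral>x. (1 / F x * h x) * F x \<partial>M) = (\<integral>x. (1 / F x * h x) * f x \<partial>M)"
    using MC.real_cond_exp_intg(2)[OF i5' kC fM] by (simp add: F_def)
  have ae7: "AE x in M. (1 / F x * h x) * F x = h x" using Fpos by eventually_elim simp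
  have e7: "(\<integral>x. (1 / F x * h x) * F x \<partial>M) = integral\<^sup>L M h"
    using integral_cong_AE[OF _ _ ae7] by simp
  have "integral\<^sup>L Q \<xi> = integral\<^sup>L M h"
    using e1 e2 e3 e4 e5 e6 e7 by (simp add: mult.commute)
  then show ?thesis using Q unfolding h_def by blast
qed

end
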